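(* Let $k\ge1$ and let $S_1,\dots,S_k\in\mathcal{B}_A(\mathcal{H})$. Then for every positive integer $n$, $$\omega_A^{4n}\Big(\sum_{i=1}^kS_i\Big)\le\frac{k^{4n-1}}{4}\left[\Big\|\sum_{i=1}^k\Big(\big(S_i^{\sharp_A}S_i\big)^{2n}+\big(S_iS_i^{\sharp_A}\big)^{2n}\Big)\Big\|_A+2\sum_{i=1}^k\omega_A\Big(\big(S_i^{\sharp_A}S_i\big)^{n}\big(S_iS_i^{\sharp_A}\big)^{n}\Big)\right].$$
   Context: $\mathcal{H}$ is a complex Hilbert space with inner product $\langle\cdot,\cdot\rangle$, and $A$ is a fixed nonzero positive bounded operator on $\mathcal{H}$. Set $\langle x,y\rangle_A=\langle Ax,y\rangle$ and $\|x\|_A=\|A^{1/2}x\|$. $\mathcal{B}_A(\mathcal{H})$ is the set of bounded operators $T$ for which there exists a bounded $S$ with $\langle Tx,y\rangle_A=\langle x,Sy\rangle_A$ for all $x,y$ (equivalently $\mathcal{R}(T^*A)\subseteq\mathcal{R}(A)$). For $T\in\mathcal{B}_A(\mathcal{H})$, $T^{\sharp_A}=A^\dagger T^*A$ ($A^\dagger$ the Moore–Penrose inverse) is the reduced solution of $AX=T^*A$. For an operator $T$ with $\|Tx\|_A\le\lambda\|x\|_A$ for some $\lambda>0$ and all $x$, $\|T\|_A=\sup\{\|Tx\|_A: \|x\|_A=1\}$, and $\omega_A(T)=\sup\{|\langle Tx,x\rangle_A|:\|x\|_A=1\}$. *)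

theory Defs
  imports "HOL-Analysis.Analysis"
begin

class complex_inner = real_normed_vector +
  fixes scaleC :: "complex \<Rightarrow> 'a \<Rightarrow> 'a"
    and cinner :: "'a \<Rightarrow> 'a \<Rightarrow> complex"
  assumes scaleC_add_right: "scaleC a (x + y) = scaleC a x + scaleC a y"
    and scaleC_add_left: "scaleC (a + b) x = scaleC a x + scaleC b x"
    and scaleC_scaleC: "scaleC a (scaleC b x) = scaleC (a * b) x"
    and scaleC_one: "scaleC 1 x = x"
    and scaleR_scaleC: "scaleR r x = scaleC (complex_of_real r) x"
    and cinner_commute: "cinner x y = cnj (cinner y x)"
    and cinner_add_left: "cinner (x + y) z = cinner x z + cinner y z"
    and cinner_scaleC_left: "cinner (scaleC a x) y = a * cinner x y"
    and cinner_ge_zero: "0 \<le> Re (cinner x x)"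
    and cinner_eq_zero_iff: "cinner x x = 0 \<longleftrightarrow> x = 0"
    and norm_eq_sqrt_cinner: "norm x = sqrt (Re (cinner x x))"

class chilbert_space = complex_inner + complete_space

definition bounded_clinear :: "('a::complex_inner \<Rightarrow> 'a) \<Rightarrow> bool" where
  "bounded_clinear T \<longleftrightarrow> bounded_linear T \<and> (\<forall>c x. T (scaleC c x) = scaleC c (T x))"

text \<open>Hilbert-space adjoint \<open>T\<^sup>*\<close> (unique when it exists).\<close>
definition adj :: "('a::complex_inner \<Rightarrow> 'a) \<Rightarrow> ('a \<Rightarrow> 'a)" where
  "adj T = (THE S. \<forall>x y. cinner (T x) y = cinner x (S y))"

definition positive_op :: "('a::complex_inner \<Rightarrow> 'a) \<Rightarrow> bool" where
  "positive_op A \<longleftrightarrow> bounded_clinear A \<and>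
     (\<forall>x. Im (cinner (A x) x) = 0 \<and> 0 \<le> Re (cinner (A x) x))"

definition innerA :: "('a::complex_inner \<Rightarrow> 'a) \<Rightarrow> 'a \<Rightarrow> 'a \<Rightarrow> complex" where
  "innerA A x y = cinner (A x) y"

definition normA :: "('a::complex_inner \<Rightarrow> 'a) \<Rightarrow> 'a \<Rightarrow> real" where
  "normA A x = sqrt (Re (cinner (A x) x))"

definition BA :: "('a::complex_inner \<Rightarrow> 'a) \<Rightarrow> ('a \<Rightarrow> 'a) set" where
  "BA A = {T. bounded_clinear T \<and>
     (\<exists>S. bounded_clinear S \<and> (\<forall>x y. innerA A (T x) y = innerA A x (S y)))}"

text \<open>Moore--Penrose inverse of A, evaluated on the range of A:
  \<open>A\<^sup>\<dagger> y\<close> is the unique x in \<open>N(A)\<^sup>\<bottom>\<close> with \<open>A x = y\<close>.\<close>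
definition mp_inv :: "('a::complex_inner \<Rightarrow> 'a) \<Rightarrow> 'a \<Rightarrow> 'a" where
  "mp_inv A y = (THE x. (\<forall>z. A z = 0 \<longrightarrow> cinner x z = 0) \<and> A x = y)"

definition sharpA :: "('a::complex_inner \<Rightarrow> 'a) \<Rightarrow> ('a \<Rightarrow> 'a) \<Rightarrow> ('a \<Rightarrow> 'a)" where
  "sharpA A T = (\<lambda>x. mp_inv A (adj T (A x)))"

definition opnormA :: "('a::complex_inner \<Rightarrow> 'a) \<Rightarrow> ('a \<Rightarrow> 'a) \<Rightarrow> real" where
  "opnormA A T = Sup {normA A (T x) | x. normA A x = 1}"

definition numradA :: "('a::complex_inner \<Rightarrow> 'a) \<Rightarrow> ('a \<Rightarrow> 'a) \<Rightarrow> real" where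
  "numradA A T = Sup {cmod (innerA A (T x) x) | x. normA A x = 1}"

end

theory Submission
  imports Defs
begin

lemma scaleC_zero_right [simp]: "scaleC a (0::'a::complex_inner) = 0"
proof -
  have "scaleC a (0::'a) = scaleC a 0 + scaleC a 0" by (metis add.right_neutral scaleC_add_right)
  then show ?thesis by simp
qed

lemma scaleC_zero_left [simp]: "scaleC 0 (x::'a::complex_inner) = 0"
  by (metis of_real_0 scaleR_scaleC scaleR_zero_left)

lemma scaleC_minus_right: "scaleC a (- (x::'a::complex_inner)) = - scaleC a x"
  by (metis add.right_inverse add_right_imp_eq scaleC_add_right scaleC_zero_right add.commute)

lemma scaleC_diff_right: "scaleC a ((x::'a::complex_inner) - y) = scaleC a x - scaleC a y"
  by (metis diff_conv_add_uminus scaleC_add_right scaleC_minus_right)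

lemma scaleC_minus_left: "scaleC (- a) (x::'a::complex_inner) = - scaleC a x"
  by (metis add.right_inverse add_right_imp_eq scaleC_add_left scaleC_zero_left add.commute)

lemma scaleC_diff_left: "scaleC (a - b) (x::'a::complex_inner) = scaleC a x - scaleC b x"
  by (metis diff_conv_add_uminus scaleC_add_left scaleC_minus_left)

lemma scaleC_sum_right: "scaleC a (\<Sum>i\<in>I. f i) = (\<Sum>i\<in>I. scaleC a (f i::'a::complex_inner))"
  by (induction I rule: infinite_finite_induct) (auto simp: scaleC_add_right)

definition hform :: "('a::complex_inner \<Rightarrow> 'a \<Rightarrow> complex) \<Rightarrow> bool" where
  "hform B \<longleftrightarrow> (\<forall>u v w. B (u+v) w = B u w + B v w) \<and> (\<forall>c u w. B (scaleC c u) w = c * B u w)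
     \<and> (\<forall>u v. B v u = cnj (B u v)) \<and> (\<forall>u. 0 \<le> Re (B u u))"

context
  fixes B :: "'a::complex_inner \<Rightarrow> 'a \<Rightarrow> complex"
  assumes hB: "hform B"
begin

lemma hf_addL: "B (u+v) w = B u w + B v w" using hB unfolding hform_def by blast
lemma hf_scL: "B (scaleC c u) w = c * B u w" using hB unfolding hform_def by blast
lemma hf_comm: "B v u = cnj (B u v)" using hB unfolding hform_def by blast
lemma hf_pos: "0 \<le> Re (B u u)" using hB unfolding hform_def by blast
lemma hf_addR: "B w (u+v) = B w u + B w v"
proof -
  have "B w (u+v) = cnj (B (u+v) w)" by (rule hf_comm)
  also have "\<dots> = cnj (B u w) + cnj (B v w)" by (simp add: hf_addL)
  also have "\<dots> = B w u + B w v" by (simp add: hf_comm[of w u] hf_comm[of w v])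
  finally show ?thesis .
qed
lemma hf_scR: "B w (scaleC c u) = cnj c * B w u"
proof -
  have "B w (scaleC c u) = cnj (B (scaleC c u) w)" by (rule hf_comm)
  also have "\<dots> = cnj c * cnj (B u w)" by (simp add: hf_scL)
  also have "\<dots> = cnj c * B w u" by (simp add: hf_comm[of w u])
  finally show ?thesis .
qed
lemma hf_zeroL [simp]: "B 0 w = 0"
proof -
  have "B (0+0) w = B 0 w + B 0 w" by (rule hf_addL)
  then show ?thesis by simp
qed
lemma hf_zeroR [simp]: "B w 0 = 0"
  using hf_comm[of 0 w] by simp
lemma hf_minusL: "B (- u) w = - B u w"
proof -
  have "B (u + - u) w = B u w + B (-u) w" by (rule hf_addL)
  then show ?thesis by (simp add: eq_neg_iff_add_eq_0 add.commute)
qed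
lemma hf_minusR: "B w (- u) = - B w u"
proof -
  have "B w (- u) = cnj (B (- u) w)" by (rule hf_comm)
  also have "\<dots> = - cnj (B u w)" by (simp add: hf_minusL)
  also have "\<dots> = - B w u" by (simp add: hf_comm[of w u])
  finally show ?thesis .
qed
lemma hf_diffL: "B (u - v) w = B u w - B v w"
  by (simp only: diff_conv_add_uminus hf_addL hf_minusL)
lemma hf_diffR: "B w (u - v) = B w u - B w v"
  by (simp only: diff_conv_add_uminus hf_addR hf_minusR)
lemma hf_sumL: "B (\<Sum>i\<in>I. f i) w = (\<Sum>i\<in>I. B (f i) w)"
  by (induction I rule: infinite_finite_induct) (auto simp: hf_addL)
lemma hf_real: "Im (B u u) = 0"
proof -
  have "Im (B u u) = Im (cnj (B u u))" using hf_comm[of u u] by simp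
  then show ?thesis by simp
qed
lemma hf_real': "B u u = complex_of_real (Re (B u u))"
  using hf_real by (simp add: complex_eq_iff)

lemma hf_expand:
  "B (u - scaleC s v) (u - scaleC s v) = B u u - cnj s * B u v - s * cnj (B u v) + s * cnj s * B v v"
  by (simp only: hf_diffL hf_diffR hf_scL hf_scR hf_comm[of u v]) (simp add: algebra_simps)

lemma hf_quad:
  "Re (B (u - scaleC (of_real t * B u v) v) (u - scaleC (of_real t * B u v) v))
    = Re (B u u) - 2 * t * (cmod (B u v))^2 + t^2 * (cmod (B u v))^2 * Re (B v v)"
proof -
  define b where "b = B u v"
  define c where "c = Re (B v v)"
  have e1: "cnj (of_real t * b) * b = of_real (t * cmod b ^2)"
    by (simp add: complex_eq_iff cmod_power2 del: norm_complex_def) (simp add: algebra_simps power2_eq_square)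
  have e2: "(of_real t * b) * cnj b = of_real (t * cmod b ^2)"
    by (simp add: complex_eq_iff cmod_power2 del: norm_complex_def) (simp add: algebra_simps power2_eq_square)
  have e3: "(of_real t * b) * cnj (of_real t * b) * B v v = of_real (t^2 * cmod b ^2 * c)"
    by (subst hf_real'[of v]) (simp add: complex_eq_iff cmod_power2 c_def del: norm_complex_def, simp add: algebra_simps power2_eq_square)
  show ?thesis unfolding hf_expand b_def[symmetric] c_def[symmetric] e1 e2 e3 by simp
qed

lemma hf_CS_sq: "(cmod (B u v))^2 \<le> Re (B u u) * Re (B v v)"
proof -
  define b where "b = B u v"
  define a where "a = Re (B u u)"
  define c where "c = Re (B v v)"
  have a0: "a \<ge> 0" and c0: "c \<ge> 0" using hf_pos a_def c_def by auto
  have key: "0 \<le> a - 2 * t * (cmod b)^2 + t^2 * (cmod b)^2 * c" for t :: real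
  proof -
    have "0 \<le> Re (B (u - scaleC (of_real t * b) v) (u - scaleC (of_real t * b) v))" by (rule hf_pos)
    also have "\<dots> = a - 2 * t * (cmod b)^2 + t^2 * (cmod b)^2 * c"
      unfolding hf_quad a_def b_def c_def ..
    finally show ?thesis .
  qed
  show ?thesis
  proof (cases "c = 0")
    case True
    show ?thesis
    proof (cases "b = 0")
      case False
      then have "(cmod b)^2 > 0" by simp
      with key[of "(a+1) / (2 * (cmod b)^2)"] True show ?thesis by (simp add: field_simps)
    qed (simp add: b_def hf_pos)
  next
    case False
    with c0 have cp: "c > 0" by simp
    have "0 \<le> a - 2 * (1/c) * (cmod b)^2 + (1/c)^2 * (cmod b)^2 * c" by (rule key)
    then have "0 \<le> a * c - (cmod b)^2" using cp by (simp add: field_simps power2_eq_square)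
    then show ?thesis by (simp add: b_def a_def c_def)
  qed
qed

lemma hf_CS: "cmod (B u v) \<le> sqrt (Re (B u u)) * sqrt (Re (B v v))"
  by (metis hf_CS_sq real_le_rsqrt real_sqrt_mult norm_ge_zero)

end

lemma hform_cinner: "hform (cinner :: 'a::complex_inner \<Rightarrow> 'a \<Rightarrow> complex)"
  unfolding hform_def using cinner_add_left cinner_scaleC_left cinner_ge_zero
  by (metis cinner_commute)

lemma norm_sq_cinner: "(norm (x::'a::complex_inner))^2 = Re (cinner x x)"
  by (simp add: norm_eq_sqrt_cinner cinner_ge_zero)

lemma cinner_CS: "cmod (cinner x y) \<le> norm (x::'a::complex_inner) * norm y"
  using hf_CS[OF hform_cinner, of x y] by (simp add: norm_eq_sqrt_cinner)

lemma bcl_linear: "bounded_clinear T \<Longrightarrow> linear T"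
  unfolding bounded_clinear_def using bounded_linear.linear by blast
lemma bcl_add: "bounded_clinear T \<Longrightarrow> T (u + v) = T u + T v"
  using bcl_linear linear_add by blast
lemma bcl_diff: "bounded_clinear T \<Longrightarrow> T (u - v) = T u - T v"
  using bcl_linear linear_diff by blast
lemma bcl_zero: "bounded_clinear T \<Longrightarrow> T 0 = 0"
  using bcl_linear linear_0 by blast
lemma bcl_sum: "bounded_clinear T \<Longrightarrow> T (\<Sum>i\<in>I. f i) = (\<Sum>i\<in>I. T (f i))"
  using bcl_linear linear_sum by blast
lemma bcl_scaleC: "bounded_clinear T \<Longrightarrow> T (scaleC c u) = scaleC c (T u)"
  unfolding bounded_clinear_def by blast
lemma bcl_bound: "bounded_clinear T \<Longrightarrow> \<exists>K>0. \<forall>x. norm (T x) \<le> norm x * K"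
  unfolding bounded_clinear_def using bounded_linear.pos_bounded by blast

lemma pos_bcl: "positive_op A \<Longrightarrow> bounded_clinear A"
  unfolding positive_op_def by blast

lemma pos_herm:
  fixes A :: "'a::complex_inner \<Rightarrow> 'a"
  assumes pA: "positive_op A"
  shows "cinner (A x) y = cinner x (A y)"
proof -
  have bA: "bounded_clinear A" using pA by (rule pos_bcl)
  have im0: "Im (cinner (A u) u) = 0" for u using pA unfolding positive_op_def by blast
  note C = hform_cinner
  define a where "a = cinner (A x) y"
  define b where "b = cinner (A y) x"
  have "cinner (A (x+y)) (x+y) = cinner (A x) x + a + b + cinner (A y) y"
    unfolding a_def b_def bcl_add[OF bA] hf_addL[OF C] hf_addR[OF C] by simp
  then have 1: "Im a + Im b = 0" using im0[of "x+y"] im0[of x] im0[of y] by simp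
  have "cinner (A (x + scaleC \<i> y)) (x + scaleC \<i> y)
        = cinner (A x) x + cnj \<i> * a + \<i> * b + \<i> * cnj \<i> * cinner (A y) y"
    unfolding a_def b_def bcl_add[OF bA] bcl_scaleC[OF bA] hf_addL[OF C] hf_addR[OF C]
      hf_scL[OF C] hf_scR[OF C] by (simp add: algebra_simps)
  then have 2: "Re b - Re a = 0" using im0[of "x + scaleC \<i> y"] im0[of x] im0[of y] by simp
  have "cinner x (A y) = cnj b" unfolding b_def by (rule cinner_commute)
  moreover have "a = cnj b" using 1 2 by (simp add: complex_eq_iff)
  ultimately show ?thesis by (simp add: a_def)
qed

lemma hform_innerA:
  assumes pA: "positive_op A"
  shows "hform (innerA A)"
proof -
  have bA: "bounded_clinear A" using pA by (rule pos_bcl)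
  note C = hform_cinner
  show ?thesis unfolding hform_def innerA_def
  proof (intro conjI allI)
    fix u v w
    show "cinner (A (u + v)) w = cinner (A u) w + cinner (A v) w"
      by (simp add: bcl_add[OF bA] hf_addL[OF C])
  next
    fix c u w
    show "cinner (A (scaleC c u)) w = c * cinner (A u) w"
      by (simp add: bcl_scaleC[OF bA] hf_scL[OF C])
  next
    fix u v
    show "cinner (A v) u = cnj (cinner (A u) v)"
      using pos_herm[OF pA, of v u] cinner_commute[of v "A u"] by simp
  next
    fix u
    show "0 \<le> Re (cinner (A u) u)" using pA unfolding positive_op_def by blast
  qed
qed

lemma normA_sq: "positive_op A \<Longrightarrow> (normA A x)^2 = Re (innerA A x x)"
  unfolding normA_def innerA_def positive_op_def by (metis real_sqrt_pow2)

lemma normA_nonneg: "positive_op A \<Longrightarrow> normA A x \<ge> 0"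
  unfolding normA_def positive_op_def by simp

lemma normA_eq: "normA A x = sqrt (Re (innerA A x x))"
  unfolding normA_def innerA_def by simp

lemma innerA_CS: "positive_op A \<Longrightarrow> cmod (innerA A u v) \<le> normA A u * normA A v"
  using hf_CS[OF hform_innerA] by (simp add: normA_eq)

lemma normA_triangle:
  assumes pA: "positive_op A"
  shows "normA A (u + v) \<le> normA A u + normA A v"
proof -
  note H = hform_innerA[OF pA]
  have "(normA A (u+v))^2 = Re (innerA A u u) + 2 * Re (innerA A u v) + Re (innerA A v v)"
    unfolding normA_sq[OF pA] hf_addL[OF H] hf_addR[OF H] hf_comm[OF H, of u v] by simp
  also have "\<dots> \<le> (normA A u)^2 + 2 * (normA A u * normA A v) + (normA A v)^2"
    using innerA_CS[OF pA, of u v] complex_Re_le_cmod[of "innerA A u v"]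
    unfolding normA_sq[OF pA] by linarith
  also have "\<dots> = (normA A u + normA A v)^2" by (simp add: power2_eq_square algebra_simps)
  finally show ?thesis
    using normA_nonneg[OF pA] by (meson add_nonneg_nonneg power2_le_imp_le)
qed

lemma normA_sum:
  assumes pA: "positive_op A"
  shows "normA A (\<Sum>i\<in>I. f i) \<le> (\<Sum>i\<in>I. normA A (f i))"
proof (induction I rule: infinite_finite_induct)
  case (insert x F)
  then show ?case using normA_triangle[OF pA, of "f x" "sum f F"] by simp
qed (auto simp: normA_def innerA_def pos_bcl[OF pA] bcl_zero hf_zeroL[OF hform_cinner])

lemma normA_le_norm:
  assumes pA: "positive_op A"
  shows "\<exists>C\<ge>0. \<forall>u. (normA A u)^2 \<le> C * (norm u)^2"
proof -
  obtain K where K: "K > 0" "\<And>x. norm (A x) \<le> norm x * K" using bcl_bound[OF pos_bcl[OF pA]] by blast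
  have "(normA A u)^2 \<le> K * (norm u)^2" for u
  proof -
    have "(normA A u)^2 = Re (cinner (A u) u)" unfolding normA_sq[OF pA] innerA_def ..
    also have "\<dots> \<le> cmod (cinner (A u) u)" by (rule complex_Re_le_cmod)
    also have "\<dots> \<le> norm (A u) * norm u" by (rule cinner_CS)
    also have "\<dots> \<le> (norm u * K) * norm u" by (simp add: K(2) mult_right_mono)
    finally show ?thesis by (simp add: power2_eq_square mult_ac)
  qed
  then show ?thesis using K by (intro exI[of _ K]) auto
qed

lemma closed_kernel:
  fixes g :: "'a::real_normed_vector \<Rightarrow> 'b::real_normed_vector"
  assumes bnd: "\<And>u. norm (g u) \<le> K * norm u"
    and dif: "\<And>u v. g (u - v) = g u - g v"
  shows "closed {u. g u = 0}"
  unfolding closed_sequential_limits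
proof (intro allI impI)
  fix x l
  assume h: "(\<forall>n. x n \<in> {u. g u = 0}) \<and> x \<longlonglongrightarrow> l"
  have "(\<lambda>n. K * norm (x n - l)) \<longlonglongrightarrow> K * 0"
    using h by (intro tendsto_mult tendsto_const tendsto_norm_zero LIM_zero) blast
  moreover have "\<forall>n\<ge>0. norm (g l) \<le> K * norm (x n - l)"
  proof (intro allI impI)
    fix n
    have "g (l - x n) = g l" using h dif[of l "x n"] by simp
    then show "norm (g l) \<le> K * norm (x n - l)" using bnd[of "l - x n"] by (simp add: norm_minus_commute)
  qed
  ultimately have "norm (g l) \<le> K * 0" using LIMSEQ_le_const by blast
  then show "l \<in> {u. g u = 0}" by simp
qed

lemma parallelogram:
  "(norm (a + b))^2 + (norm (a - b))^2 = 2 * (norm (a::'a::complex_inner))^2 + 2 * (norm b)^2"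
  unfolding norm_sq_cinner
  by (simp add: hf_addL[OF hform_cinner] hf_addR[OF hform_cinner]
       hf_diffL[OF hform_cinner] hf_diffR[OF hform_cinner])

lemma proj_exists:
  fixes M :: "'a::chilbert_space set"
  assumes M0: "0 \<in> M" and Madd: "\<And>u v. u \<in> M \<Longrightarrow> v \<in> M \<Longrightarrow> u + v \<in> M"
    and Msc: "\<And>c u. u \<in> M \<Longrightarrow> scaleC c u \<in> M" and Mcl: "closed M"
  shows "\<exists>m\<in>M. \<forall>v\<in>M. cinner (x - m) v = 0"
proof -
  define D where "D = Inf ((\<lambda>m. (norm (x - m))^2) ` M)"
  have bdd: "bdd_below ((\<lambda>m. (norm (x - m))^2) ` M)"
    by (rule bdd_belowI[of _ 0]) auto
  have Dle: "D \<le> (norm (x - m))^2" if "m \<in> M" for m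
    unfolding D_def using bdd that by (simp add: cInf_lower)
  have ex: "\<exists>m\<in>M. (norm (x - m))^2 < D + e" if "e > 0" for e
  proof -
    have "D < D + e" using that by simp
    then obtain y where "y \<in> (\<lambda>m. (norm (x - m))^2) ` M" "y < D + e"
      using cInf_lessD[of "(\<lambda>m. (norm (x - m))^2) ` M" "D + e"] M0 unfolding D_def by blast
    then show ?thesis by blast
  qed
  have "\<forall>j. \<exists>m. m \<in> M \<and> (norm (x - m))^2 < D + 1 / real (Suc j)"
  proof
    fix j
    have "1 / real (Suc j) > 0" by simp
    from ex[OF this] show "\<exists>m. m \<in> M \<and> (norm (x - m))^2 < D + 1 / real (Suc j)" by blast
  qed
  then obtain ms where ms: "\<And>j. ms j \<in> M" "\<And>j. (norm (x - ms j))^2 < D + 1 / real (Suc j)"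
    by metis
  have par: "(norm (ms i - ms j))^2 \<le> 2 / real (Suc i) + 2 / real (Suc j)" for i j
  proof -
    define mid where "mid = scaleR (1/2) (ms i + ms j)"
    have midM: "mid \<in> M" unfolding mid_def scaleR_scaleC using ms(1) Madd Msc by blast
    have ab: "(x - ms i) + (x - ms j) = scaleR 2 (x - mid)"
      unfolding mid_def by (simp add: algebra_simps scaleR_right_diff_distrib scaleR_2)
    have "(norm ((x - ms i) + (x - ms j)))^2 = 4 * (norm (x - mid))^2"
      unfolding ab by (simp add: power2_eq_square)
    then have "(norm ((x - ms i) + (x - ms j)))^2 \<ge> 4 * D" using Dle[OF midM] by simp
    moreover have "(norm ((x - ms i) - (x - ms j)))^2 = (norm (ms i - ms j))^2"
      by (simp add: norm_minus_commute)
    moreover note parallelogram[of "x - ms i" "x - ms j"] ms(2)[of i] ms(2)[of j]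
    ultimately show ?thesis by linarith
  qed
  have "Cauchy ms"
  proof (rule CauchyI)
    fix e :: real assume e: "e > 0"
    obtain N :: nat where N: "4 / e^2 < real N" using reals_Archimedean2 by blast
    have "\<forall>m\<ge>N. \<forall>n\<ge>N. norm (ms m - ms n) < e"
    proof (intro allI impI)
      fix m n assume mn: "N \<le> m" "N \<le> n"
      have e2: "e^2 > 0" using e by simp
      have h4: "4 < real N * e^2" using N e2 by (simp add: field_simps)
      have "e^2 * real (Suc N) = e^2 + real N * e^2" by (simp add: algebra_simps)
      then have "4 < e^2 * real (Suc N)" using h4 e2 by linarith
      then have "4 / real (Suc N) < e^2"
        by (subst pos_divide_less_eq) auto
      moreover have "2 / real (Suc m) \<le> 2 / real (Suc N)" "2 / real (Suc n) \<le> 2 / real (Suc N)"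
        using mn by (simp_all add: frac_le)
      ultimately have "(norm (ms m - ms n))^2 < e^2" using par[of m n] by linarith
      then show "norm (ms m - ms n) < e" using e by (simp add: power_less_imp_less_base)
    qed
    then show "\<exists>N. \<forall>m\<ge>N. \<forall>n\<ge>N. norm (ms m - ms n) < e" by blast
  qed
  then obtain l where l: "ms \<longlonglongrightarrow> l" using Cauchy_convergent convergent_def by blast
  have lM: "l \<in> M" using closed_sequentially[OF Mcl ms(1) l] .
  have "(\<lambda>j. (norm (x - ms j))^2) \<longlonglongrightarrow> (norm (x - l))^2"
    by (intro tendsto_intros l)
  moreover have "(\<lambda>j. D + inverse (real (Suc j))) \<longlonglongrightarrow> D + 0"
    by (intro tendsto_intros LIMSEQ_inverse_real_of_nat)
  ultimately have lD: "(norm (x - l))^2 \<le> D"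
    using LIMSEQ_le ms(2) by (fastforce simp: inverse_eq_divide less_imp_le)
  have minl: "(norm (x - l))^2 \<le> (norm ((x - l) - v))^2" if "v \<in> M" for v
  proof -
    show ?thesis unfolding diff_diff_eq using Dle[OF Madd[OF lM that]] lD by linarith
  qed
  have "\<forall>v\<in>M. cinner (x - l) v = 0"
  proof (intro ballI, rule ccontr)
    fix v assume vM: "v \<in> M" and ne: "cinner (x - l) v \<noteq> 0"
    define w where "w = x - l"
    define b where "b = cinner w v"
    define t :: real where "t = 1 / ((norm v)^2 + 1)"
    have np: "(norm v)^2 + 1 > 0" by (simp add: add_nonneg_pos)
    have tp: "t > 0" unfolding t_def using np by simp
    have tl: "t * (norm v)^2 < 1" unfolding t_def using np by (simp add: field_simps)
    have bp: "(cmod b)^2 > 0" using ne unfolding b_def w_def by simp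
    have "(norm w)^2 \<le> (norm (w - scaleC (of_real t * b) v))^2"
      unfolding w_def b_def by (rule minl, rule Msc, rule vM)
    also have "\<dots> = (norm w)^2 - 2 * t * (cmod b)^2 + t^2 * (cmod b)^2 * (norm v)^2"
      unfolding norm_sq_cinner b_def by (rule hf_quad[OF hform_cinner])
    finally have "t * (cmod b)^2 * 2 \<le> t * (cmod b)^2 * (t * (norm v)^2)"
      by (simp add: power2_eq_square algebra_simps)
    then have "2 \<le> t * (norm v)^2" using tp bp by simp
    then show False using tl by simp
  qed
  then show ?thesis using lM by blast
qed

lemma cinner_self_zero: "cinner (w::'a::complex_inner) w = 0 \<Longrightarrow> w = 0"
  using cinner_eq_zero_iff by blast

lemma riesz:
  fixes g :: "'a::chilbert_space \<Rightarrow> complex"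
  assumes add: "\<And>u v. g (u + v) = g u + g v" and sc: "\<And>c u. g (scaleC c u) = c * g u"
    and cl: "closed {u. g u = 0}"
  shows "\<exists>z. \<forall>u. g u = cinner u z"
proof (cases "\<forall>u. g u = 0")
  case True
  then show ?thesis by (intro exI[of _ 0]) (simp add: hf_zeroR[OF hform_cinner])
next
  case False
  then obtain u0 where u0: "g u0 \<noteq> 0" by blast
  have g0: "g 0 = 0" using add[of 0 0] by simp
  have gm: "g (- u) = - g u" for u using add[of u "- u"] g0 by (simp add: add_eq_0_iff)
  have gd: "g (u - v) = g u - g v" for u v using add[of u "- v"] gm[of v] by simp
  define M where "M = {u. g u = 0}"
  obtain m where mM: "m \<in> M" and orth: "\<forall>v\<in>M. cinner (u0 - m) v = 0"
    using proj_exists[of M u0] cl g0 add sc unfolding M_def by auto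
  define w where "w = u0 - m"
  have gw: "g w \<noteq> 0" using u0 mM unfolding w_def M_def by (simp add: gd)
  have ww: "cinner w w \<noteq> 0" using gw g0 cinner_self_zero by metis
  have wwr: "cinner w w = of_real (Re (cinner w w))" by (rule hf_real'[OF hform_cinner])
  define z where "z = scaleC (cnj (g w / cinner w w)) w"
  have "g u = cinner u z" for u
  proof -
    define v where "v = scaleC (g u) w - scaleC (g w) u"
    have "g v = 0" unfolding v_def by (simp add: gd sc)
    then have "cinner w v = 0" using orth unfolding M_def w_def by blast
    then have "cinner v w = 0" using cinner_commute[of v w] by simp
    then have "g u * cinner w w - g w * cinner u w = 0"
      unfolding v_def by (simp add: hf_diffL[OF hform_cinner] hf_scL[OF hform_cinner])
    then have "g u = g w * cinner u w / cinner w w" using ww by (simp add: field_simps)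
    also have "\<dots> = cinner u z" unfolding z_def hf_scR[OF hform_cinner]
      by simp
    finally show ?thesis .
  qed
  then show ?thesis by blast
qed

lemma adj_exists:
  fixes T :: "'a::chilbert_space \<Rightarrow> 'a"
  assumes bT: "bounded_clinear T"
  shows "\<forall>u y. cinner (T u) y = cinner u (adj T y)"
proof -
  obtain K where K: "K > 0" "\<And>x. norm (T x) \<le> norm x * K" using bcl_bound[OF bT] by blast
  have "\<forall>y. \<exists>z. \<forall>u. cinner (T u) y = cinner u z"
  proof
    fix y
    show "\<exists>z. \<forall>u. cinner (T u) y = cinner u z"
    proof (rule riesz)
      fix u v show "cinner (T (u + v)) y = cinner (T u) y + cinner (T v) y"
        by (simp add: bcl_add[OF bT] hf_addL[OF hform_cinner])
    next
      fix c u show "cinner (T (scaleC c u)) y = c * cinner (T u) y"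
        by (simp add: bcl_scaleC[OF bT] hf_scL[OF hform_cinner])
    next
      show "closed {u. cinner (T u) y = 0}"
      proof (rule closed_kernel[of _ "K * norm y"])
        fix u
        have "norm (cinner (T u) y) \<le> norm (T u) * norm y" by (rule cinner_CS)
        also have "\<dots> \<le> norm u * K * norm y" using K(2)[of u] by (simp add: mult_right_mono)
        finally show "norm (cinner (T u) y) \<le> K * norm y * norm u" by (simp add: mult_ac)
      next
        fix u v show "cinner (T (u - v)) y = cinner (T u) y - cinner (T v) y"
          by (simp add: bcl_diff[OF bT] hf_diffL[OF hform_cinner])
      qed
    qed
  qed
  then obtain F where F: "\<forall>y u. cinner (T u) y = cinner u (F y)" by metis
  have uniq: "G = F" if G: "\<forall>u y. cinner (T u) y = cinner u (G y)" for G
  proof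
    fix y
    have "cinner u (G y - F y) = 0" for u
      using G F by (simp add: hf_diffR[OF hform_cinner])
    then show "G y = F y" using cinner_self_zero[of "G y - F y"] by simp
  qed
  have "adj T = F" unfolding adj_def
    by (rule the_equality) (use F uniq in auto)
  then show ?thesis using F by simp
qed

lemma mp_inv_prop:
  fixes A :: "'a::chilbert_space \<Rightarrow> 'a"
  assumes bA: "bounded_clinear A"
  shows "A (mp_inv A (A w)) = A w"
proof -
  obtain K where K: "K > 0" "\<And>x. norm (A x) \<le> norm x * K" using bcl_bound[OF bA] by blast
  define M where "M = {u. A u = 0}"
  have clM: "closed M" unfolding M_def
    by (rule closed_kernel[of _ K]) (use K bcl_diff[OF bA] in \<open>auto simp: mult_ac\<close>)
  obtain m where mM: "m \<in> M" and orth: "\<forall>v\<in>M. cinner (w - m) v = 0"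
    using proj_exists[of M w] clM bcl_zero[OF bA] bcl_add[OF bA] bcl_scaleC[OF bA]
    unfolding M_def by auto
  define P where "P = (\<lambda>x. (\<forall>z. A z = 0 \<longrightarrow> cinner x z = 0) \<and> A x = A w)"
  have Pp: "P (w - m)" unfolding P_def using orth mM bcl_diff[OF bA] unfolding M_def by auto
  have uq: "x = w - m" if "P x" for x
  proof -
    have Ad: "A (x - (w - m)) = 0" using that Pp unfolding P_def by (simp add: bcl_diff[OF bA])
    then have "cinner x (x - (w - m)) = 0" "cinner (w - m) (x - (w - m)) = 0"
      using that Pp unfolding P_def by blast+
    then have "cinner (x - (w - m)) (x - (w - m)) = 0" by (simp add: hf_diffL[OF hform_cinner])
    then show ?thesis using cinner_self_zero by force
  qed
  have "P (mp_inv A (A w))" unfolding mp_inv_def P_def[symmetric]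
    by (rule theI[of P, OF Pp uq])
  then show ?thesis unfolding P_def by blast
qed

lemma sharp_prop:
  fixes A :: "'a::chilbert_space \<Rightarrow> 'a"
  assumes pA: "positive_op A" and T: "T \<in> BA A"
  shows "\<exists>W. bounded_clinear W \<and> (\<forall>x y. innerA A (T x) y = innerA A x (W y))
            \<and> (\<forall>x. A (sharpA A T x) = A (W x))"
proof -
  obtain W where bT: "bounded_clinear T" and bW: "bounded_clinear W"
    and W: "\<forall>x y. innerA A (T x) y = innerA A x (W y)"
    using T unfolding BA_def by blast
  have bA: "bounded_clinear A" using pA by (rule pos_bcl)
  note adjT = adj_exists[OF bT]
  have aw: "adj T (A x) = A (W x)" for x
  proof -
    have "cinner u (adj T (A x) - A (W x)) = 0" for u
    proof -
      have "cinner u (adj T (A x)) = cinner (T u) (A x)" using adjT by simp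
      also have "\<dots> = innerA A (T u) x" unfolding innerA_def by (simp add: pos_herm[OF pA])
      also have "\<dots> = innerA A u (W x)" using W by simp
      also have "\<dots> = cinner u (A (W x))" unfolding innerA_def by (simp add: pos_herm[OF pA])
      finally show ?thesis by (simp add: hf_diffR[OF hform_cinner])
    qed
    then show ?thesis using cinner_self_zero[of "adj T (A x) - A (W x)"] by simp
  qed
  have "A (sharpA A T x) = A (W x)" for x
    unfolding sharpA_def aw by (rule mp_inv_prop[OF bA])
  then show ?thesis using bW W by blast
qed

context
  fixes A :: "'a::complex_inner \<Rightarrow> 'a"
  assumes pA: "positive_op A"
begin

lemma innerA_conj: "innerA A u v = cnj (innerA A v u)"
  by (rule hf_comm[OF hform_innerA[OF pA]])

lemma innerA_congL: "A u = A u' \<Longrightarrow> innerA A u v = innerA A u' v"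
  unfolding innerA_def by simp

lemma innerA_congR: "A v = A v' \<Longrightarrow> innerA A u v = innerA A u v'"
  unfolding innerA_def by (simp add: pos_herm[OF pA])

lemma normA_cong: "A u = A u' \<Longrightarrow> normA A u = normA A u'"
  unfolding normA_def by (metis innerA_congR innerA_def)

lemma Re_innerA_le: "Re (innerA A u v) \<le> normA A u * normA A v"
  by (rule order_trans[OF complex_Re_le_cmod innerA_CS[OF pA]])

lemma lax:
  assumes Rb: "\<And>y. norm (R y) \<le> K * norm y"
    and Rs: "\<And>u v. innerA A (R u) v = innerA A u (R v)"
  shows "\<exists>c\<ge>0. \<forall>x. normA A (R x) \<le> c * normA A x"
proof -
  define K' where "K' = max K 0 + 1"
  have K'p: "K' > 0" unfolding K'_def by simp
  have Rb': "norm (R y) \<le> K' * norm y" for y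
  proof -
    have "K * norm y \<le> K' * norm y" unfolding K'_def by (intro mult_right_mono) auto
    then show ?thesis using Rb[of y] by simp
  qed
  have Rjs: "innerA A ((R^^j) u) v = innerA A u ((R^^j) v)" for j u v
  proof (induction j arbitrary: u v)
    case (Suc j)
    have "innerA A ((R^^Suc j) u) v = innerA A ((R^^j) u) (R v)" using Rs by simp
    also have "\<dots> = innerA A u ((R^^j) (R v))" using Suc by simp
    also have "(R^^j) (R v) = (R^^Suc j) v" by (simp add: funpow_swap1)
    finally show ?case .
  qed simp
  have Rjb: "norm ((R^^j) y) \<le> K'^j * norm y" for j y
  proof (induction j)
    case (Suc j)
    have "norm ((R^^Suc j) y) \<le> K' * norm ((R^^j) y)" using Rb' by simp
    also have "\<dots> \<le> K' * (K'^j * norm y)" using Suc K'p by (intro mult_left_mono) auto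
    finally show ?case by (simp add: mult_ac)
  qed simp
  obtain C where C: "C \<ge> 0" "\<And>u. (normA A u)^2 \<le> C * (norm u)^2" using normA_le_norm[OF pA] by blast
  have "normA A (R x) \<le> K' * normA A x" for x
  proof (rule ccontr)
    assume con: "\<not> ?thesis"
    define nx where "nx = normA A x"
    define a where "a j = normA A ((R^^(2^j)) x)" for j
    have nx0: "nx \<ge> 0" unfolding nx_def by (rule normA_nonneg[OF pA])
    have a0: "a j \<ge> 0" for j unfolding a_def by (rule normA_nonneg[OF pA])
    have a0R: "a 0 = normA A (R x)" unfolding a_def by simp
    have step: "(a j)^2 \<le> nx * a (Suc j)" for j
    proof -
      have "(a j)^2 = Re (innerA A ((R^^(2^j)) x) ((R^^(2^j)) x))" unfolding a_def normA_sq[OF pA] ..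
      also have "\<dots> = Re (innerA A x ((R^^(2^j)) ((R^^(2^j)) x)))" by (simp only: Rjs)
      also have "(R^^(2^j)) ((R^^(2^j)) x) = (R^^(2^Suc j)) x"
        by (simp only: power_Suc mult_2 funpow_add comp_apply)
      also have "Re (innerA A x ((R^^(2^Suc j)) x)) \<le> nx * a (Suc j)"
        unfolding nx_def a_def by (rule Re_innerA_le)
      finally show ?thesis .
    qed
    have pw: "(a 0)^(2^j) \<le> nx^(2^j - 1) * a j" for j
    proof (induction j)
      case (Suc j)
      have "(a 0)^(2^Suc j) = ((a 0)^(2^j))^2" by (simp only: power_Suc power_even_eq)
      also have "\<dots> \<le> (nx^(2^j - 1) * a j)^2"
        using Suc a0 by (intro power_mono) auto
      also have "\<dots> = nx^(2 * (2^j - 1)) * (a j)^2" by (simp add: power_mult_distrib power_even_eq)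
      also have "\<dots> \<le> nx^(2 * (2^j - 1)) * (nx * a (Suc j))"
        using step nx0 by (intro mult_left_mono) auto
      also have "\<dots> = nx^(2^Suc j - 1) * a (Suc j)"
      proof -
        have e: "2 * (2^j - 1) + 1 = (2^Suc j - 1 :: nat)"
        proof -
          have h1: "(1::nat) \<le> 2^j" by simp
          have h2: "(2::nat)^Suc j = 2 * 2^j" by simp
          show ?thesis using h1 h2 by arith
        qed
        show ?thesis by (simp only: e[symmetric] power_add power_one_right mult.assoc)
      qed
      finally show ?case .
    qed simp
    have ab: "a j \<le> sqrt C * (K'^(2^j) * norm x)" for j
    proof -
      have n1: "norm ((R^^(2^j)) x) \<le> K'^(2^j) * norm x" by (rule Rjb)
      have n2: "(norm ((R^^(2^j)) x))^2 \<le> (K'^(2^j) * norm x)^2"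
        by (rule power_mono[OF n1 norm_ge_zero])
      have "(a j)^2 \<le> C * (norm ((R^^(2^j)) x))^2" unfolding a_def by (rule C(2))
      also have "\<dots> \<le> C * (K'^(2^j) * norm x)^2" by (rule mult_left_mono[OF n2 C(1)])
      also have "\<dots> = (sqrt C * (K'^(2^j) * norm x))^2"
        by (simp only: power_mult_distrib real_sqrt_pow2[OF C(1)])
      finally have "(a j)^2 \<le> (sqrt C * (K'^(2^j) * norm x))^2" .
      moreover have "0 \<le> sqrt C * (K'^(2^j) * norm x)"
        using C(1) K'p by simp
      ultimately show ?thesis by (rule power2_le_imp_le)
    qed
    have gt: "a 0 > K' * nx" using con a0R nx_def by simp
    show False
    proof (cases "nx = 0")
      case True
      then have "(a 0)^2 \<le> 0" using step[of 0] by simp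
      then have "a 0 = 0" using a0[of 0] by simp
      then show False using gt True by simp
    next
      case False
      then have nxp: "nx > 0" using nx0 by simp
      define q where "q = a 0 / (K' * nx)"
      have q1: "q > 1" unfolding q_def using gt nxp K'p by simp
      define L where "L = sqrt C * norm x / nx"
      have qb: "q^(2^j) \<le> L" for j
      proof -
        define N :: nat where "N = 2^j"
        have N1: "N \<ge> 1" unfolding N_def by simp
        have e1: "a 0 = q * (K' * nx)" unfolding q_def using nxp K'p by simp
        have "(a 0)^N \<le> nx^(N - 1) * a j" unfolding N_def by (rule pw)
        also have "\<dots> \<le> nx^(N - 1) * (sqrt C * (K'^N * norm x))"
          unfolding N_def by (rule mult_left_mono[OF ab zero_le_power[OF nx0]])
        finally have h: "(a 0)^N \<le> nx^(N - 1) * (sqrt C * (K'^N * norm x))" .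
        have nxN: "nx^N = nx^(N - 1) * nx" using N1
          by (metis Suc_diff_le diff_Suc_1 power_Suc2 )
        have eqA: "(a 0)^N = (K'^N * nx^(N - 1)) * (q^N * nx)"
          unfolding e1 power_mult_distrib nxN by (simp only: mult_ac)
        have eqB: "nx^(N - 1) * (sqrt C * (K'^N * norm x)) = (K'^N * nx^(N - 1)) * (sqrt C * norm x)"
          by (simp only: mult_ac)
        have "(K'^N * nx^(N - 1)) * (q^N * nx) \<le> (K'^N * nx^(N - 1)) * (sqrt C * norm x)"
          using h unfolding eqA eqB .
        moreover have "K'^N * nx^(N - 1) > 0" using K'p nxp by simp
        ultimately have "q^N * nx \<le> sqrt C * norm x" by (rule mult_left_le_imp_le)
        then show ?thesis unfolding L_def N_def using nxp by (simp add: pos_le_divide_eq)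
      qed
      obtain j where j: "L < q^j" using real_arch_pow[OF q1] by blast
      have "q^j \<le> q^(2^j)" using q1 by (intro power_increasing) (auto simp: less_imp_le)
      then show False using qb[of j] j by simp
    qed
  qed
  then show ?thesis using K'p by (intro exI[of _ K']) auto
qed

definition Abdd :: "('a \<Rightarrow> 'a) \<Rightarrow> bool" where
  "Abdd T \<longleftrightarrow> (\<exists>c\<ge>0. \<forall>x. normA A (T x) \<le> c * normA A x)"

lemma Abdd_pair:
  assumes bX: "bounded_clinear X" and bY: "bounded_clinear Y"
    and XY: "\<And>u v. innerA A (X u) v = innerA A u (Y v)"
  shows "Abdd X"
proof -
  have YX: "innerA A (Y u) v = innerA A u (X v)" for u v
  proof -
    have "innerA A (Y u) v = cnj (innerA A v (Y u))" by (rule innerA_conj)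
    also have "\<dots> = cnj (innerA A (X v) u)" by (simp only: XY)
    also have "\<dots> = innerA A u (X v)" by (rule innerA_conj[symmetric])
    finally show ?thesis .
  qed
  obtain KX where KX: "KX > 0" "\<And>x. norm (X x) \<le> norm x * KX" using bcl_bound[OF bX] by blast
  obtain KY where KY: "KY > 0" "\<And>x. norm (Y x) \<le> norm x * KY" using bcl_bound[OF bY] by blast
  have Rb: "norm (Y (X y)) \<le> (KX * KY) * norm y" for y
  proof -
    have "norm (Y (X y)) \<le> norm (X y) * KY" by (rule KY(2))
    also have "\<dots> \<le> norm y * KX * KY" using KX(2) KY(1) by (intro mult_right_mono) auto
    finally show ?thesis by (simp add: mult_ac)
  qed
  have Rs: "innerA A (Y (X u)) v = innerA A u (Y (X v))" for u v
    using YX XY by simp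
  obtain c where c: "c \<ge> 0" "\<And>x. normA A (Y (X x)) \<le> c * normA A x"
    using lax[of "\<lambda>x. Y (X x)", OF Rb Rs] by blast
  have "normA A (X x) \<le> sqrt c * normA A x" for x
  proof -
    have "(normA A (X x))^2 = Re (innerA A x (Y (X x)))"
      unfolding normA_sq[OF pA] XY ..
    also have "\<dots> \<le> normA A x * normA A (Y (X x))" by (rule Re_innerA_le)
    also have "\<dots> \<le> normA A x * (c * normA A x)"
      using c(2) normA_nonneg[OF pA] by (intro mult_left_mono) auto
    also have "\<dots> = (sqrt c * normA A x)^2" using c(1) by (simp add: power2_eq_square mult_ac)
    finally show ?thesis using c(1) normA_nonneg[OF pA] by (rule_tac power2_le_imp_le) auto
  qed
  then show ?thesis unfolding Abdd_def using c(1) by (intro exI[of _ "sqrt c"]) auto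
qed

lemma Abdd_comp: "Abdd T \<Longrightarrow> Abdd U \<Longrightarrow> Abdd (T \<circ> U)"
proof -
  assume "Abdd T" "Abdd U"
  then obtain c d where c: "c \<ge> 0" "\<And>x. normA A (T x) \<le> c * normA A x"
    and d: "d \<ge> 0" "\<And>x. normA A (U x) \<le> d * normA A x" unfolding Abdd_def by blast
  have "normA A (T (U x)) \<le> (c * d) * normA A x" for x
  proof -
    have "normA A (T (U x)) \<le> c * normA A (U x)" by (rule c(2))
    also have "\<dots> \<le> c * (d * normA A x)" using c(1) d(2) by (intro mult_left_mono) auto
    finally show ?thesis by (simp add: mult_ac)
  qed
  then show ?thesis unfolding Abdd_def using c d by (intro exI[of _ "c * d"]) auto
qed

lemma Abdd_id: "Abdd id"
  unfolding Abdd_def by (intro exI[of _ 1]) auto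

lemma Abdd_pow: "Abdd T \<Longrightarrow> Abdd (T ^^ n)"
  by (induction n) (auto simp: Abdd_id Abdd_comp)

lemma Abdd_add: "Abdd T \<Longrightarrow> Abdd U \<Longrightarrow> Abdd (\<lambda>x. T x + U x)"
proof -
  assume "Abdd T" "Abdd U"
  then obtain c d where c: "c \<ge> 0" "\<And>x. normA A (T x) \<le> c * normA A x"
    and d: "d \<ge> 0" "\<And>x. normA A (U x) \<le> d * normA A x" unfolding Abdd_def by blast
  have "normA A (T x + U x) \<le> (c + d) * normA A x" for x
    using normA_triangle[OF pA, of "T x" "U x"] c(2)[of x] d(2)[of x] by (simp add: algebra_simps)
  then show ?thesis unfolding Abdd_def using c d by (intro exI[of _ "c + d"]) auto
qed

lemma Abdd_sum: "(\<And>i. i \<in> I \<Longrightarrow> Abdd (T i)) \<Longrightarrow> Abdd (\<lambda>x. \<Sum>i\<in>I. T i x)"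
proof (induction I rule: infinite_finite_induct)
  case (infinite I)
  then show ?case unfolding Abdd_def by (auto simp: normA_def innerA_def pos_bcl[OF pA] bcl_zero
        hf_zeroL[OF hform_cinner])
next
  case empty
  then show ?case unfolding Abdd_def by (auto simp: normA_def innerA_def pos_bcl[OF pA] bcl_zero
        hf_zeroL[OF hform_cinner])
next
  case (insert x F)
  then show ?case using Abdd_add[of "T x" "\<lambda>y. \<Sum>i\<in>F. T i y"] by simp
qed

lemma Abdd_bdd_norm: "Abdd T \<Longrightarrow> bdd_above {normA A (T x) | x. normA A x = 1}"
proof -
  assume "Abdd T"
  then obtain c where c: "c \<ge> 0" "\<And>x. normA A (T x) \<le> c * normA A x" unfolding Abdd_def by blast
  have "normA A (T x) \<le> c" if "normA A x = 1" for x
    using c(2)[of x] that by simp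
  then show ?thesis unfolding bdd_above_def by blast
qed

lemma Abdd_bdd_num: "Abdd T \<Longrightarrow> bdd_above {cmod (innerA A (T x) x) | x. normA A x = 1}"
proof -
  assume "Abdd T"
  then obtain c where c: "c \<ge> 0" "\<And>x. normA A (T x) \<le> c * normA A x" unfolding Abdd_def by blast
  have "cmod (innerA A (T x) x) \<le> c" if "normA A x = 1" for x
    using innerA_CS[OF pA, of "T x" x] c(2)[of x] that by simp
  then show ?thesis unfolding bdd_above_def by blast
qed

end

lemma cheb_pow:
  fixes a :: "'i \<Rightarrow> real"
  assumes fin: "finite I" and nn: "\<And>i. i \<in> I \<Longrightarrow> a i \<ge> 0"
  shows "(\<Sum>i\<in>I. a i) * (\<Sum>i\<in>I. a i ^ m) \<le> real (card I) * (\<Sum>i\<in>I. a i ^ Suc m)"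
proof -
  let ?S = "(\<Sum>i\<in>I. \<Sum>j\<in>I. (a i - a j) * (a i ^ m - a j ^ m))"
  have "?S = 2 * (real (card I) * (\<Sum>i\<in>I. a i ^ Suc m) - (\<Sum>i\<in>I. a i) * (\<Sum>i\<in>I. a i ^ m))"
    by (simp add: algebra_simps sum_subtractf sum.distrib sum.swap[of "\<lambda>i j. a i * a j ^ m"]
        sum_distrib_left sum_distrib_right)
  moreover have "?S \<ge> 0"
  proof (intro sum_nonneg)
    fix i j assume "i \<in> I" "j \<in> I"
    then have ai: "a i \<ge> 0" and aj: "a j \<ge> 0" using nn by auto
    show "0 \<le> (a i - a j) * (a i ^ m - a j ^ m)"
    proof (cases "a i \<le> a j")
      case True
      then have "a i ^ m \<le> a j ^ m" using ai by (rule_tac power_mono) auto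
      then show ?thesis using True by (simp add: mult_nonpos_nonpos)
    next
      case False
      then have "a j ^ m \<le> a i ^ m" using aj by (rule_tac power_mono) auto
      then show ?thesis using False by simp
    qed
  qed
  ultimately show ?thesis by simp
qed

lemma power_mean_sum:
  fixes a :: "'i \<Rightarrow> real"
  assumes fin: "finite I" and nn: "\<And>i. i \<in> I \<Longrightarrow> a i \<ge> 0" and m: "m \<ge> 1"
  shows "(\<Sum>i\<in>I. a i) ^ m \<le> real (card I) ^ (m - 1) * (\<Sum>i\<in>I. a i ^ m)"
  using m
proof (induction m rule: nat_induct_at_least)
  case base
  then show ?case by simp
next
  case (Suc m)
  have s0: "(\<Sum>i\<in>I. a i) \<ge> 0" using nn by (simp add: sum_nonneg)
  have "(\<Sum>i\<in>I. a i) ^ Suc m = (\<Sum>i\<in>I. a i) * (\<Sum>i\<in>I. a i) ^ m" by simp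
  also have "\<dots> \<le> (\<Sum>i\<in>I. a i) * (real (card I) ^ (m - 1) * (\<Sum>i\<in>I. a i ^ m))"
    using Suc.IH s0 by (rule_tac mult_left_mono) auto
  also have "\<dots> = real (card I) ^ (m - 1) * ((\<Sum>i\<in>I. a i) * (\<Sum>i\<in>I. a i ^ m))" by simp
  also have "\<dots> \<le> real (card I) ^ (m - 1) * (real (card I) * (\<Sum>i\<in>I. a i ^ Suc m))"
    by (rule mult_left_mono[OF cheb_pow[OF fin nn]]) auto
  also have "\<dots> = real (card I) ^ (Suc m - 1) * (\<Sum>i\<in>I. a i ^ Suc m)"
    using Suc.hyps by (cases m) (auto simp: mult_ac)
  finally show ?case .
qed

lemma logconv_pow:
  fixes g :: "nat \<Rightarrow> real"
  assumes nn: "\<And>m. g m \<ge> 0" and g0: "g 0 = 1"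
    and lc: "\<And>m. (g (Suc m))^2 \<le> g m * g (Suc (Suc m))"
  shows "g 1 ^ n \<le> g n"
proof -
  have step: "g 1 * g k \<le> g (Suc k)" for k
  proof (induction k)
    case 0
    then show ?case using g0 by simp
  next
    case (Suc k)
    show ?case
    proof (cases "g k = 0")
      case True
      then have "(g (Suc k))^2 \<le> 0" using lc[of k] by simp
      then have "g (Suc k) = 0" by simp
      then show ?thesis using nn by simp
    next
      case False
      then have gk: "g k > 0" using nn[of k] by simp
      have "g k * (g 1 * g (Suc k)) = g (Suc k) * (g 1 * g k)" by (simp add: mult_ac)
      also have "\<dots> \<le> g (Suc k) * g (Suc k)" using Suc.IH nn by (rule_tac mult_left_mono) auto
      also have "\<dots> \<le> g k * g (Suc (Suc k))" using lc[of k] by (simp add: power2_eq_square)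
      finally show ?thesis using gk by (simp add: mult_le_cancel_left_pos)
    qed
  qed
  show ?thesis
  proof (induction n)
    case (Suc n)
    have "g 1 ^ Suc n = g 1 * g 1 ^ n" by simp
    also have "\<dots> \<le> g 1 * g n" using Suc.IH nn[of 1] by (rule_tac mult_left_mono) auto
    also have "\<dots> \<le> g (Suc n)" by (rule step)
    finally show ?case .
  qed (simp add: g0)
qed

context
  fixes A :: "'a::complex_inner \<Rightarrow> 'a"
  assumes pA: "positive_op A"
begin

lemma pow_selfadj:
  assumes Rs: "\<And>u v. innerA A (R u) v = innerA A u (R v)"
  shows "innerA A ((R^^j) u) v = innerA A u ((R^^j) v)"
proof (induction j arbitrary: u v)
  case (Suc j)
  have "innerA A ((R^^Suc j) u) v = innerA A ((R^^j) u) (R v)" using Rs by simp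
  also have "\<dots> = innerA A u ((R^^j) (R v))" using Suc by simp
  also have "(R^^j) (R v) = (R^^Suc j) v" by (simp add: funpow_swap1)
  finally show ?case .
qed simp

lemma buzano:
  assumes e1: "normA A e = 1"
  shows "2 * cmod (innerA A a e * innerA A e b) \<le> normA A a * normA A b + cmod (innerA A a b)"
proof -
  note H = hform_innerA[OF pA]
  define c where "c = innerA A b e"
  have ee: "innerA A e e = 1"
  proof -
    have "Re (innerA A e e) = 1" using e1 normA_sq[OF pA, of e] by simp
    then show ?thesis using hf_real'[OF H, of e] by simp
  qed
  have eb: "innerA A e b = cnj c" unfolding c_def by (rule hf_comm[OF H])
  define w where "w = b - scaleC (2 * c) e"
  have "innerA A w w = innerA A b b - cnj (2 * c) * c - (2 * c) * cnj c + (2 * c) * cnj (2 * c) * 1"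
    unfolding w_def hf_expand[OF H] c_def[symmetric] ee ..
  then have "innerA A w w = innerA A b b" by (simp add: algebra_simps)
  then have nw: "normA A w = normA A b" unfolding normA_eq by simp
  have "innerA A a w = innerA A a b - 2 * (innerA A a e * innerA A e b)"
    unfolding w_def hf_diffR[OF H] hf_scR[OF H] eb by (simp add: algebra_simps)
  then have "2 * (innerA A a e * innerA A e b) = innerA A a b - innerA A a w" by simp
  then have "2 * cmod (innerA A a e * innerA A e b) = cmod (innerA A a b - innerA A a w)"
    by (metis norm_mult norm_numeral)
  also have "\<dots> \<le> cmod (innerA A a b) + cmod (innerA A a w)" by (rule norm_triangle_ineq4)
  also have "\<dots> \<le> cmod (innerA A a b) + normA A a * normA A b"
    using innerA_CS[OF pA, of a w] nw by simp
  finally show ?thesis by simp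
qed

end

context
  fixes A :: "'a::complex_inner \<Rightarrow> 'a" and X Y :: "'a \<Rightarrow> 'a"
  assumes pA: "positive_op A"
    and XY: "\<And>u v. innerA A (X u) v = innerA A u (Y v)"
    and YX: "\<And>u v. innerA A (Y u) v = innerA A u (X v)"
begin

lemma P_sa: "innerA A (((Y \<circ> X)^^j) u) v = innerA A u (((Y \<circ> X)^^j) v)"
proof (rule pow_selfadj[OF pA])
  fix u v show "innerA A ((Y \<circ> X) u) v = innerA A u ((Y \<circ> X) v)"
    using YX XY by simp
qed

lemma P_even: "innerA A (((Y \<circ> X)^^(j+j)) x) x = innerA A (((Y \<circ> X)^^j) x) (((Y \<circ> X)^^j) x)"
proof -
  have "((Y \<circ> X)^^(j+j)) x = ((Y \<circ> X)^^j) (((Y \<circ> X)^^j) x)" by (simp add: funpow_add)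
  then show ?thesis using P_sa by simp
qed

lemma P_odd: "innerA A (((Y \<circ> X)^^(Suc (j+j))) x) x
   = innerA A (X (((Y \<circ> X)^^j) x)) (X (((Y \<circ> X)^^j) x))"
proof -
  define w where "w = ((Y \<circ> X)^^j) x"
  have "((Y \<circ> X)^^(Suc (j+j))) x = ((Y \<circ> X)^^j) (Y (X w))"
  proof -
    have "Suc (j+j) = j + Suc j" by simp
    then show ?thesis unfolding w_def by (simp only: funpow_add comp_apply funpow.simps(2))
  qed
  then have "innerA A (((Y \<circ> X)^^(Suc (j+j))) x) x = innerA A (Y (X w)) w"
    using P_sa unfolding w_def by simp
  also have "\<dots> = innerA A (X w) (X w)" by (rule YX)
  finally show ?thesis unfolding w_def .
qed

definition gP :: "'a \<Rightarrow> nat \<Rightarrow> real" where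
  "gP x m = Re (innerA A (((Y \<circ> X)^^m) x) x)"

lemma m_cases: "\<exists>j. m = j + j \<or> m = Suc (j + j)" for m :: nat
  by presburger

lemma gP_prop: "innerA A (((Y \<circ> X)^^m) x) x = of_real (gP x m) \<and> gP x m \<ge> 0"
proof -
  note H = hform_innerA[OF pA]
  obtain j where "m = j + j \<or> m = Suc (j + j)" using m_cases by blast
  then show ?thesis
  proof
    assume m: "m = j + j"
    show ?thesis unfolding gP_def m P_even using hf_real'[OF H] hf_pos[OF H] by metis
  next
    assume m: "m = Suc (j + j)"
    show ?thesis unfolding gP_def m P_odd using hf_real'[OF H] hf_pos[OF H] by metis
  qed
qed

lemma gP_nn: "gP x m \<ge> 0" using gP_prop by blast

lemma sq_le: "Re (innerA A u v) \<ge> 0 \<Longrightarrow> (Re (innerA A u v))^2 \<le> (normA A u)^2 * (normA A v)^2"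
  by (metis Re_innerA_le[OF pA] power_mono power_mult_distrib)

lemma gP_lc: "(gP x (Suc m))^2 \<le> gP x m * gP x (Suc (Suc m))"
proof -
  obtain j where "m = j + j \<or> m = Suc (j + j)" using m_cases by blast
  then show ?thesis
  proof
    assume m: "m = j + j"
    define w where "w = ((Y \<circ> X)^^j) x"
    have "gP x (Suc m) = Re (innerA A ((Y \<circ> X) w) w)"
      unfolding gP_def m P_odd w_def using YX by simp
    moreover have "(normA A ((Y \<circ> X) w))^2 = gP x (Suc (Suc m))"
    proof -
      have "Suc (Suc m) = Suc j + Suc j" using m by simp
      then show ?thesis unfolding gP_def normA_sq[OF pA] w_def using P_even[of "Suc j" x]
        by (simp add: funpow_swap1)
    qed
    moreover have "(normA A w)^2 = gP x m"
      unfolding gP_def normA_sq[OF pA] w_def m P_even ..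
    ultimately show ?thesis using sq_le[of "(Y \<circ> X) w" w] gP_nn[of x "Suc m"] by (simp add: mult.commute)
  next
    assume m: "m = Suc (j + j)"
    define w where "w = ((Y \<circ> X)^^j) x"
    define z where "z = ((Y \<circ> X)^^(Suc j)) x"
    have zw: "z = Y (X w)" unfolding z_def w_def by simp
    have "gP x (Suc m) = Re (innerA A z z)"
    proof -
      have "Suc m = Suc j + Suc j" using m by simp
      then show ?thesis unfolding gP_def z_def using P_even[of "Suc j" x] by simp
    qed
    also have "innerA A z z = innerA A (X w) (X z)" by (subst (1) zw) (rule YX)
    finally have g1: "gP x (Suc m) = Re (innerA A (X w) (X z))" .
    have "(normA A (X w))^2 = gP x m"
      unfolding gP_def normA_sq[OF pA] w_def m P_odd ..
    moreover have "(normA A (X z))^2 = gP x (Suc (Suc m))"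
    proof -
      have "Suc (Suc m) = Suc (Suc j + Suc j)" using m by simp
      then show ?thesis unfolding gP_def normA_sq[OF pA] z_def using P_odd[of "Suc j" x] by simp
    qed
    ultimately show ?thesis using sq_le[of "X w" "X z"] g1 gP_nn[of x "Suc m"] by simp
  qed
qed

lemma gP_HM:
  assumes x1: "normA A x = 1"
  shows "gP x 1 ^ n \<le> gP x n"
proof (rule logconv_pow)
  show "gP x 0 = 1" unfolding gP_def using x1 normA_sq[OF pA, of x] by simp
qed (auto simp: gP_nn gP_lc)

end

lemma single_bound:
  fixes A S Z :: "'a::complex_inner \<Rightarrow> 'a"
  assumes pA: "positive_op A"
    and XY: "\<And>u v. innerA A (S u) v = innerA A u (Z v)"
    and ZS: "\<And>u v. innerA A (Z u) v = innerA A u (S v)"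
    and x1: "normA A x = 1"
  shows "cmod (innerA A (S x) x) ^ (4*n) \<le> 1/4 * (Re (innerA A (((Z \<circ> S)^^(2*n)) x) x)
      + Re (innerA A (((S \<circ> Z)^^(2*n)) x) x)
      + 2 * cmod (innerA A ((((Z \<circ> S)^^n) \<circ> ((S \<circ> Z)^^n)) x) x))"
proof -
  note H = hform_innerA[OF pA]
  define gp where "gp = gP A S Z x"
  define gq where "gq = gP A Z S x"
  define t where "t = cmod (innerA A (S x) x)"
  have t0: "t \<ge> 0" unfolding t_def by simp
  have gp1: "gp 1 = (normA A (S x))^2"
    unfolding gp_def gP_def[OF pA XY ZS] normA_sq[OF pA] using ZS by simp
  have gq1: "gq 1 = (normA A (Z x))^2"
    unfolding gq_def gP_def[OF pA ZS XY] normA_sq[OF pA] using XY by simp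
  have "t \<le> normA A (S x)" unfolding t_def using innerA_CS[OF pA, of "S x" x] x1 by simp
  then have tp: "t^2 \<le> gp 1" unfolding gp1 using t0 by (rule_tac power_mono) auto
  have "t \<le> normA A (Z x)" unfolding t_def XY using innerA_CS[OF pA, of x "Z x"] x1 by simp
  then have tq: "t^2 \<le> gq 1" unfolding gq1 using t0 by (rule_tac power_mono) auto
  have gpn: "gp m \<ge> 0" for m unfolding gp_def by (rule gP_nn[OF pA XY ZS])
  have gqn: "gq m \<ge> 0" for m unfolding gq_def by (rule gP_nn[OF pA ZS XY])
  have "t^(4*n) = (t^2 * t^2)^n"
    by (simp add: power_mult[symmetric] power_add[symmetric])
  also have "\<dots> \<le> (gp 1 * gq 1)^n"
    using tp tq t0 gpn[of 1] by (intro power_mono mult_mono) auto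
  also have "\<dots> = gp 1 ^ n * gq 1 ^ n" by (simp add: power_mult_distrib)
  also have "\<dots> \<le> gp n * gq n"
    using gP_HM[OF pA XY ZS x1, of n] gP_HM[OF pA ZS XY x1, of n] gpn gqn
    unfolding gp_def gq_def by (intro mult_mono) auto
  finally have t1: "t^(4*n) \<le> gp n * gq n" .
  define a where "a = ((Z \<circ> S)^^n) x"
  define b where "b = ((S \<circ> Z)^^n) x"
  have ia: "innerA A a x = of_real (gp n)" unfolding a_def gp_def using gP_prop[OF pA XY ZS] by blast
  have ib: "innerA A x b = of_real (gq n)"
  proof -
    have "innerA A b x = of_real (gq n)" unfolding b_def gq_def using gP_prop[OF pA ZS XY] by blast
    then show ?thesis unfolding hf_comm[OF H, of x b] by simp
  qed
  have "gp n * gq n = cmod (innerA A a x * innerA A x b)"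
    unfolding ia ib using gpn gqn by (simp add: norm_mult)
  also have "\<dots> \<le> (normA A a * normA A b + cmod (innerA A a b)) / 2"
    using buzano[OF pA x1, of a b] by simp
  finally have t2: "gp n * gq n \<le> (normA A a * normA A b + cmod (innerA A a b)) / 2" .
  have na: "(normA A a)^2 = gp (2*n)"
    unfolding normA_sq[OF pA] a_def gp_def gP_def[OF pA XY ZS] mult_2 P_even[OF pA XY ZS] ..
  have nb: "(normA A b)^2 = gq (2*n)"
    unfolding normA_sq[OF pA] b_def gq_def gP_def[OF pA ZS XY] mult_2 P_even[OF pA ZS XY] ..
  have "normA A a * normA A b \<le> ((normA A a)^2 + (normA A b)^2) / 2"
    using sum_squares_bound[of "normA A a" "normA A b"] by simp
  then have t3: "normA A a * normA A b \<le> (gp (2*n) + gq (2*n)) / 2" using na nb by simp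
  have "innerA A a b = innerA A x (((Z \<circ> S)^^n) b)" unfolding a_def by (rule P_sa[OF pA XY ZS])
  also have "\<dots> = cnj (innerA A ((((Z \<circ> S)^^n) \<circ> ((S \<circ> Z)^^n)) x) x)"
    unfolding b_def comp_apply by (rule hf_comm[OF H])
  finally have t4: "cmod (innerA A a b) = cmod (innerA A ((((Z \<circ> S)^^n) \<circ> ((S \<circ> Z)^^n)) x) x)"
    by simp
  have "t^(4*n) \<le> 1/4 * (gp (2*n) + gq (2*n) + 2 * cmod (innerA A ((((Z \<circ> S)^^n) \<circ> ((S \<circ> Z)^^n)) x) x))"
  proof -
    define c where "c = cmod (innerA A ((((Z \<circ> S)^^n) \<circ> ((S \<circ> Z)^^n)) x) x)"
    define p where "p = normA A a * normA A b"
    have "t^(4*n) \<le> (p + c) / 2" using t1 t2 t4 unfolding c_def p_def by simp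
    moreover have "p \<le> (gp (2*n) + gq (2*n)) / 2" using t3 unfolding p_def .
    ultimately have "t^(4*n) \<le> 1/4 * (gp (2*n) + gq (2*n) + 2 * c)" by simp
    then show ?thesis unfolding c_def .
  qed
  then show ?thesis unfolding t_def gp_def gq_def gP_def[OF pA XY ZS] gP_def[OF pA ZS XY] .
qed

lemma normA_scale:
  assumes pA: "positive_op A"
  shows "normA A (scaleC (of_real r) y) = \<bar>r\<bar> * normA A y"
proof -
  note H = hform_innerA[OF pA]
  have "innerA A (scaleC (of_real r) y) (scaleC (of_real r) y) = of_real (r^2) * innerA A y y"
    by (simp add: hf_scL[OF H] hf_scR[OF H] power2_eq_square)
  then have "Re (innerA A (scaleC (of_real r) y) (scaleC (of_real r) y)) = r^2 * Re (innerA A y y)"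
    by simp
  then show ?thesis unfolding normA_eq by (simp add: real_sqrt_mult)
qed

lemma exists_unit:
  fixes A :: "'a::complex_inner \<Rightarrow> 'a"
  assumes pA: "positive_op A" and nz: "A \<noteq> (\<lambda>x. 0)"
  shows "\<exists>x. normA A x = 1"
proof -
  obtain y where y: "A y \<noteq> 0" using nz by blast
  have "normA A y \<noteq> 0"
  proof
    assume n0: "normA A y = 0"
    have "cmod (innerA A y (A y)) \<le> normA A y * normA A (A y)" by (rule innerA_CS[OF pA])
    then have "innerA A y (A y) = 0" using n0 by simp
    then have "A y = 0" unfolding innerA_def using cinner_self_zero by blast
    then show False using y by simp
  qed
  then have np: "normA A y > 0" using normA_nonneg[OF pA, of y] by simp
  have "normA A (scaleC (of_real (1 / normA A y)) y) = 1"
    unfolding normA_scale[OF pA] using np by simp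
  then show ?thesis by blast
qed

lemma le_opnormA:
  assumes pA: "positive_op A" and T: "Abdd A T" and x1: "normA A x = 1"
  shows "Re (innerA A (T x) x) \<le> opnormA A T"
proof -
  have "Re (innerA A (T x) x) \<le> normA A (T x) * normA A x" by (rule Re_innerA_le[OF pA])
  also have "\<dots> = normA A (T x)" using x1 by simp
  also have "\<dots> \<le> opnormA A T" unfolding opnormA_def
    by (rule cSup_upper) (use x1 Abdd_bdd_norm[OF pA T] in auto)
  finally show ?thesis .
qed

lemma le_numradA:
  assumes pA: "positive_op A" and T: "Abdd A T" and x1: "normA A x = 1"
  shows "cmod (innerA A (T x) x) \<le> numradA A T"
  unfolding numradA_def
  by (rule cSup_upper) (use x1 Abdd_bdd_num[OF pA T] in auto)

lemma numradA_pow_le: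
  assumes ex: "\<exists>x. normA A x = 1" and m: "m > 0"
    and bnd: "\<And>x. normA A x = 1 \<Longrightarrow> cmod (innerA A (T x) x) ^ m \<le> R"
  shows "numradA A T ^ m \<le> R"
proof -
  define E where "E = {cmod (innerA A (T x) x) | x. normA A x = 1}"
  obtain x0 where x0: "normA A x0 = 1" using ex by blast
  have R0: "R \<ge> 0" using bnd[OF x0] by (meson order_trans zero_le_power norm_ge_zero)
  define r where "r = root m R"
  have r0: "r \<ge> 0" unfolding r_def using R0 by (simp add: real_root_ge_zero)
  have Er: "e \<le> r" if eE: "e \<in> E" for e
  proof -
    obtain x where x: "normA A x = 1" "e = cmod (innerA A (T x) x)" using eE unfolding E_def by blast
    have e0: "e \<ge> 0" using x by simp
    have "e = root m (e ^ m)" using e0 m by (simp add: real_root_power_cancel)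
    also have "\<dots> \<le> root m R" using bnd[OF x(1)] x(2) m by (simp add: real_root_le_mono)
    finally show ?thesis unfolding r_def .
  qed
  have ne: "E \<noteq> {}" unfolding E_def using x0 by blast
  have s1: "Sup E \<le> r" by (rule cSup_least[OF ne]) (use Er in blast)
  have bdd: "bdd_above E" using Er unfolding bdd_above_def by blast
  have "cmod (innerA A (T x0) x0) \<in> E" unfolding E_def using x0 by blast
  then have s0: "Sup E \<ge> 0" using cSup_upper[OF _ bdd] by (meson norm_ge_zero order_trans)
  have "(Sup E) ^ m \<le> r ^ m" using s0 s1 by (rule_tac power_mono) auto
  also have "r ^ m = R" unfolding r_def using m R0 by simp
  finally show ?thesis unfolding numradA_def E_def .
qed

lemma BA_facts:
  fixes A :: "'a::chilbert_space \<Rightarrow> 'a"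
  assumes pA: "positive_op A" and T: "T \<in> BA A"
  shows "(\<forall>u v. innerA A (T u) v = innerA A u (sharpA A T v))
       \<and> (\<forall>u v. innerA A (sharpA A T u) v = innerA A u (T v))
       \<and> Abdd A T \<and> Abdd A (sharpA A T)"
proof -
  obtain W where bW: "bounded_clinear W" and W: "\<And>x y. innerA A (T x) y = innerA A x (W y)"
    and AW: "\<And>x. A (sharpA A T x) = A (W x)"
    using sharp_prop[OF pA T] by blast
  have bT: "bounded_clinear T" using T unfolding BA_def by blast
  have WT: "innerA A (W u) v = innerA A u (T v)" for u v
  proof -
    have "innerA A (W u) v = cnj (innerA A v (W u))" by (rule innerA_conj[OF pA])
    also have "\<dots> = cnj (innerA A (T v) u)" by (simp only: W)
    also have "\<dots> = innerA A u (T v)" by (rule innerA_conj[OF pA, symmetric])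
    finally show ?thesis .
  qed
  have 1: "innerA A (T u) v = innerA A u (sharpA A T v)" for u v
    unfolding W using innerA_congR[OF pA AW[symmetric]] by blast
  have 2: "innerA A (sharpA A T u) v = innerA A u (T v)" for u v
    using innerA_congL[OF pA AW[of u]] WT by simp
  have 3: "Abdd A T" by (rule Abdd_pair[OF pA bT bW W])
  have aW: "Abdd A W" by (rule Abdd_pair[OF pA bW bT WT])
  have 4: "Abdd A (sharpA A T)"
    using aW unfolding Abdd_def[OF pA] using normA_cong[OF pA AW] by simp
  show ?thesis using 1 2 3 4 by blast
qed

theorem theorem3p10:
  fixes A :: "'a::chilbert_space \<Rightarrow> 'a"
    and S :: "nat \<Rightarrow> 'a \<Rightarrow> 'a"
    and k n :: nat
  assumes "positive_op A" and "A \<noteq> (\<lambda>x. 0)"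
    and "k \<ge> 1"
    and "\<And>i. i \<in> {1..k} \<Longrightarrow> S i \<in> BA A"
    and "n \<ge> 1"
  shows "(numradA A (\<lambda>x. \<Sum>i=1..k. S i x)) ^ (4*n)
    \<le> real k ^ (4*n - 1) / 4 *
      (opnormA A (\<lambda>x. \<Sum>i=1..k. ((sharpA A (S i) \<circ> S i) ^^ (2*n)) x
                                   + ((S i \<circ> sharpA A (S i)) ^^ (2*n)) x)
       + 2 * (\<Sum>i=1..k. numradA A (((sharpA A (S i) \<circ> S i) ^^ n)
                                     \<circ> ((S i \<circ> sharpA A (S i)) ^^ n))))"
proof -
  note pA = assms(1)
  note H = hform_innerA[OF pA]
  define I where "I = {1..k}"
  have finI: "finite I" and cardI: "card I = k" unfolding I_def by auto
  have F: "\<And>i. i \<in> I \<Longrightarrow> (\<forall>u v. innerA A (S i u) v = innerA A u (sharpA A (S i) v))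
       \<and> (\<forall>u v. innerA A (sharpA A (S i) u) v = innerA A u (S i v))
       \<and> Abdd A (S i) \<and> Abdd A (sharpA A (S i))"
    using BA_facts[OF pA assms(4)] unfolding I_def by blast
  define T where "T = (\<lambda>x. \<Sum>i\<in>I. ((sharpA A (S i) \<circ> S i) ^^ (2*n)) x
                                   + ((S i \<circ> sharpA A (S i)) ^^ (2*n)) x)"
  define N where "N i = ((sharpA A (S i) \<circ> S i) ^^ n) \<circ> ((S i \<circ> sharpA A (S i)) ^^ n)" for i
  have AT: "Abdd A T" unfolding T_def
    by (rule Abdd_sum[OF pA], rule Abdd_add[OF pA]) (use F in \<open>auto intro!: Abdd_pow[OF pA] Abdd_comp[OF pA]\<close>)
  have AN: "Abdd A (N i)" if "i \<in> I" for i unfolding N_def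
    using F[OF that] by (auto intro!: Abdd_pow[OF pA] Abdd_comp[OF pA])
  define R where "R = real k ^ (4*n - 1) / 4 * (opnormA A T + 2 * (\<Sum>i\<in>I. numradA A (N i)))"
  have bound: "cmod (innerA A ((\<lambda>x. \<Sum>i\<in>I. S i x) x) x) ^ (4*n) \<le> R" if x1: "normA A x = 1" for x
  proof -
    define t where "t i = cmod (innerA A (S i x) x)" for i
    define gp where "gp i = Re (innerA A (((sharpA A (S i) \<circ> S i) ^^ (2*n)) x) x)" for i
    define gq where "gq i = Re (innerA A (((S i \<circ> sharpA A (S i)) ^^ (2*n)) x) x)" for i
    define c where "c i = cmod (innerA A (N i x) x)" for i
    have "cmod (innerA A ((\<lambda>x. \<Sum>i\<in>I. S i x) x) x) = cmod (\<Sum>i\<in>I. innerA A (S i x) x)"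
      by (simp add: hf_sumL[OF H])
    also have "\<dots> \<le> (\<Sum>i\<in>I. t i)" unfolding t_def by (rule norm_sum)
    finally have s1: "cmod (innerA A ((\<lambda>x. \<Sum>i\<in>I. S i x) x) x) \<le> (\<Sum>i\<in>I. t i)" .
    have "cmod (innerA A ((\<lambda>x. \<Sum>i\<in>I. S i x) x) x) ^ (4*n) \<le> (\<Sum>i\<in>I. t i) ^ (4*n)"
      using s1 by (rule_tac power_mono) auto
    also have "\<dots> \<le> real (card I) ^ (4*n - 1) * (\<Sum>i\<in>I. t i ^ (4*n))"
      by (rule power_mean_sum[OF finI]) (use assms(5) in \<open>auto simp: t_def\<close>)
    finally have m1: "cmod (innerA A ((\<lambda>x. \<Sum>i\<in>I. S i x) x) x) ^ (4*n) \<le> real (card I) ^ (4*n - 1) * (\<Sum>i\<in>I. t i ^ (4*n))" .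
    have "(\<Sum>i\<in>I. t i ^ (4*n)) \<le> (\<Sum>i\<in>I. 1/4 * (gp i + gq i + 2 * c i))"
    proof (rule sum_mono)
      fix i assume i: "i \<in> I"
      have XY: "\<And>u v. innerA A (S i u) v = innerA A u (sharpA A (S i) v)"
        and YX: "\<And>u v. innerA A (sharpA A (S i) u) v = innerA A u (S i v)" using F[OF i] by blast+
      show "t i ^ (4*n) \<le> 1/4 * (gp i + gq i + 2 * c i)"
        unfolding t_def gp_def gq_def c_def N_def by (rule single_bound[OF pA XY YX x1])
    qed
    also have "(\<Sum>i\<in>I. 1/4 * (gp i + gq i + 2 * c i)) = 1/4 * ((\<Sum>i\<in>I. gp i + gq i) + 2 * (\<Sum>i\<in>I. c i))"
      by (simp add: sum.distrib sum_distrib_left algebra_simps sum_divide_distrib[symmetric])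
    also have "\<dots> \<le> 1/4 * (opnormA A T + 2 * (\<Sum>i\<in>I. numradA A (N i)))"
    proof -
      have "(\<Sum>i\<in>I. gp i + gq i) = Re (innerA A (T x) x)"
        unfolding T_def gp_def gq_def by (simp add: hf_sumL[OF H] hf_addL[OF H])
      also have "\<dots> \<le> opnormA A T" by (rule le_opnormA[OF pA AT x1])
      finally have a: "(\<Sum>i\<in>I. gp i + gq i) \<le> opnormA A T" .
      have b: "(\<Sum>i\<in>I. c i) \<le> (\<Sum>i\<in>I. numradA A (N i))"
        unfolding c_def by (rule sum_mono, rule le_numradA[OF pA AN x1])
      show ?thesis using a b by simp
    qed
    finally have m2: "(\<Sum>i\<in>I. t i ^ (4*n)) \<le> 1/4 * (opnormA A T + 2 * (\<Sum>i\<in>I. numradA A (N i)))" .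
    have "real (card I) ^ (4*n - 1) * (\<Sum>i\<in>I. t i ^ (4*n))
        \<le> real (card I) ^ (4*n - 1) * (1/4 * (opnormA A T + 2 * (\<Sum>i\<in>I. numradA A (N i))))"
      by (rule mult_left_mono[OF m2]) simp
    with m1 show ?thesis unfolding R_def cardI by (simp add: mult_ac)
  qed
  have "(numradA A (\<lambda>x. \<Sum>i\<in>I. S i x)) ^ (4*n) \<le> R"
    by (rule numradA_pow_le[OF exists_unit[OF pA assms(2)]]) (use assms(5) bound in auto)
  then show ?thesis unfolding R_def T_def N_def I_def .
qed

end
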